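(* Suppose the constraint qualification below holds, let $\{(x^k,y^k,z^k)\}$ be generated by Algorithm G-ADMM-M with parameters $\sigma>0$, $\rho\in(0,2)$, and let $(\bar x,\bar y,\bar z)\in\mathbb{W}^*$. Then for every integer $k\ge0$, $$\Psi_k(\bar x,\bar y,\bar z)-\Psi_{k+1}(\bar x,\bar y,\bar z)\ \ge\ \theta_k+\sigma(2-\rho)\|\mathcal{A}^*x^k+\mathcal{B}^*y^k-c\|^2,$$ where $\Psi_k$ and $\theta_k$ are defined below.
   Context: Let $\mathbb{X},\mathbb{Y},\mathbb{Z}$ be finite-dimensional real Euclidean spaces with inner product $\langle\cdot,\cdot\rangle$ and induced norm $\|\cdot\|$. For a self-adjoint linear operator $\mathcal{G}$, $\|u\|_{\mathcal G}^2:=\langle u,\mathcal G u\rangle$. Let $f_1:\mathbb{X}\to\mathbb{R}$ and $h_1:\mathbb{Y}\to\mathbb{R}$ be convex, continuously differentiable with globally Lipschitz continuous gradients, and $f_2:\mathbb{X}\to(-\infty,+\infty]$, $h_2:\mathbb{Y}\to(-\infty,+\infty]$ closed proper convex. Let $\mathcal{A}:\mathbb{Z}\to\mathbb{X}$, $\mathcal{B}:\mathbb{Z}\to\mathbb{Y}$ be linear with adjoints $\mathcal{A}^*,\mathcal{B}^*$, and $c\in\mathbb{Z}$. The problem is $\min\{f_1(x)+f_2(x)+h_1(y)+h_2(y): \mathcal{A}^*x+\mathcal{B}^*y=c\}$. Let $\Sigma_{f_1}\preceq\widehat\Sigma_{f_1}$ be self-adjoint positive semidefinite operators on $\mathbb{X}$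 with $\tfrac12\|x-x'\|_{\Sigma_{f_1}}^2\le f_1(x)-f_1(x')-\langle x-x',\nabla f_1(x')\rangle\le\tfrac12\|x-x'\|_{\widehat\Sigma_{f_1}}^2$ for all $x,x'$, and likewise $\Sigma_{h_1}\preceq\widehat\Sigma_{h_1}$ on $\mathbb{Y}$ for $h_1$. Constraint qualification: there exists $(x^0,y^0)\in\operatorname{ri}(\operatorname{dom}f_2\times\operatorname{dom}h_2)$ with $\mathcal{A}^*x^0+\mathcal{B}^*y^0=c$. $\mathbb{W}^*$ denotes the set of $(\bar x,\bar y,\bar z)\in\mathbb{X}\times\mathbb{Y}\times\mathbb{Z}$ with $0\in\partial f_2(\bar x)+\nabla f_1(\bar x)+\mathcal{A}\bar z$, $0\in\partial h_2(\bar y)+\nabla h_1(\bar y)+\mathcal{B}\bar z$, $\mathcal{A}^*\bar x+\mathcal{B}^*\bar y=c$. Algorithm G-ADMM-M: choose $\sigma>0$, $\rho\in(0,2)$, self-adjoint positive semidefinite $\mathcal S$ on $\mathbb{X}$ and $\mathcal T$ on $\mathbb{Y}$ such that $\mathcal F:=\widehat\Sigma_{f_1}+\mathcal S+\sigma\mathcal{A}\mathcal{A}^*\succ0$ and $\mathcal H:=\widehat\Sigma_{h_1}+\mathcal T+\sigma\mathcal{B}\mathcal{B}^*\succ0$, and $\widetilde\omega^0=(\widetilde x^0,\widetilde y^0,\widetilde z^0)\in\operatorname{dom}f_2\times\operatorname{dom}h_2\times\mathbb{Z}$. For $k=0,1,2,\dots$: $x^k=\arg\min_x\{f_2(x)+\tfrac12\langle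 x,\mathcal F x\rangle+\langle\nabla f_1(\widetilde x^k)+\sigma\mathcal{A}(\mathcal{A}^*\widetilde x^k+\mathcal{B}^*\widetilde y^k-c+\sigma^{-1}\widetilde z^k)-\mathcal F\widetilde x^k,x\rangle\}$; $z^k=\widetilde z^k+\sigma(\mathcal{A}^*x^k+\mathcal{B}^*\widetilde y^k-c)$; $y^k=\arg\min_y\{h_2(y)+\tfrac12\langle y,\mathcal H y\rangle+\langle\nabla h_1(\widetilde y^k)+\sigma\mathcal{B}(\mathcal{A}^*x^k+\mathcal{B}^*\widetilde y^k-c+\sigma^{-1}z^k)-\mathcal H\widetilde y^k,y\rangle\}$; $\widetilde\omega^{k+1}=\widetilde\omega^k+\rho(\omega^k-\widetilde\omega^k)$ where $\omega^k=(x^k,y^k,z^k)$, $\widetilde\omega^k=(\widetilde x^k,\widetilde y^k,\widetilde z^k)$. Notation: for fixed $(\bar x,\bar y,\bar z)$, $x_e^k:=x^k-\bar x$, $y_e^k:=y^k-\bar y$, $z_e^k:=z^k-\bar z$, $\widetilde x_e^k:=\widetilde x^k-\bar x$, $\widetilde y_e^k:=\widetilde y^k-\bar y$. Define $\Psi_k(\bar x,\bar y,\bar z):=\frac{1}{\sigma\rho}\|z_e^k+\sigma(\rho-1)\mathcal{A}^*x_e^k\|^2+\sigma(2-\rho)\|\mathcal{A}^*x_e^k\|^2+\frac1\rho\|\widetilde x_e^{k+1}\|^2_{\widehat\Sigma_{f_1}+\mathcal S}+\frac1\rho\|\widetilde y_e^{k}\|^2_{\widehat\Sigma_{h_1}+\mathcal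 T}$, $\theta_k:=\|\widetilde x^{k+1}-x^{k+1}\|^2_{\frac12\Sigma_{f_1}-\widehat\Sigma_{f_1}+(2-\rho)(\widehat\Sigma_{f_1}+\mathcal S)}+\|\widetilde y^{k}-y^{k}\|^2_{\frac12\Sigma_{h_1}-\widehat\Sigma_{h_1}+(2-\rho)(\widehat\Sigma_{h_1}+\mathcal T)}$ (here $\|u\|^2_{\mathcal G}:=\langle u,\mathcal G u\rangle$ even if $\mathcal G$ is not semidefinite). *)

theory Defs
  imports "HOL-Analysis.Analysis"
begin

text \<open>Quadratic form  \<open>\<parallel>u\<parallel>\<^sub>G\<^sup>2 = \<langle>u, G u\<rangle>\<close> (also for non-semidefinite G).\<close>
definition qf :: "('a::real_inner \<Rightarrow> 'a) \<Rightarrow> 'a \<Rightarrow> real" where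
  "qf G u = u \<bullet> G u"

definition self_adjoint_op :: "('a::real_inner \<Rightarrow> 'a) \<Rightarrow> bool" where
  "self_adjoint_op G \<longleftrightarrow> linear G \<and> (\<forall>u v. G u \<bullet> v = u \<bullet> G v)"

definition psd_op :: "('a::real_inner \<Rightarrow> 'a) \<Rightarrow> bool" where
  "psd_op G \<longleftrightarrow> self_adjoint_op G \<and> (\<forall>u. 0 \<le> u \<bullet> G u)"

definition pd_op :: "('a::real_inner \<Rightarrow> 'a) \<Rightarrow> bool" where
  "pd_op G \<longleftrightarrow> self_adjoint_op G \<and> (\<forall>u. u \<noteq> 0 \<longrightarrow> 0 < u \<bullet> G u)"

text \<open>A closed proper convex function \<open>X \<rightarrow> (-\<infinity>,+\<infinity>]\<close> is represented by its
  (nonempty, convex) effective domain D and its real values on D (the value is +\<infinity> off D).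
  Closedness = closedness of the epigraph.\<close>
definition closed_proper_convex :: "'a::real_normed_vector set \<Rightarrow> ('a \<Rightarrow> real) \<Rightarrow> bool" where
  "closed_proper_convex D f \<longleftrightarrow> D \<noteq> {} \<and> convex D \<and> convex_on D f \<and>
     closed {(x, t). x \<in> D \<and> f x \<le> t}"

definition subdiff :: "'a::real_inner set \<Rightarrow> ('a \<Rightarrow> real) \<Rightarrow> 'a \<Rightarrow> 'a set" where
  "subdiff D f x = {g. x \<in> D \<and> (\<forall>y\<in>D. f x + g \<bullet> (y - x) \<le> f y)}"

definition is_argmin_on :: "'a set \<Rightarrow> ('a \<Rightarrow> real) \<Rightarrow> 'a \<Rightarrow> bool" where
  "is_argmin_on D \<phi> u \<longleftrightarrow> u \<in> D \<and> (\<forall>v\<in>D. \<phi> u \<le> \<phi> v)"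

definition smooth_convex :: "('a::real_inner \<Rightarrow> real) \<Rightarrow> ('a \<Rightarrow> 'a) \<Rightarrow> bool" where
  "smooth_convex f g \<longleftrightarrow> convex_on UNIV f \<and>
     (\<forall>x. (f has_derivative (\<lambda>h. g x \<bullet> h)) (at x)) \<and>
     (\<exists>L. \<forall>x x'. norm (g x - g x') \<le> L * norm (x - x'))"

end

theory Submission
  imports Defs
begin


lemma sa_lin: "self_adjoint_op G \<Longrightarrow> linear G" by (simp add: self_adjoint_op_def)
lemma sa_sym: "self_adjoint_op G \<Longrightarrow> G u \<bullet> v = u \<bullet> G v" by (simp add: self_adjoint_op_def)

lemma qf_expand:
  assumes "self_adjoint_op G"
  shows "qf G (v + s *\<^sub>R w) = qf G v + 2 * s * (v \<bullet> G w) + s^2 * qf G w"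
proof -
  have l: "linear G" using assms by (rule sa_lin)
  have "w \<bullet> G v = v \<bullet> G w" using sa_sym[OF assms, of w v] by (simp add: inner_commute)
  then show ?thesis
    unfolding qf_def using l
    by (simp add: linear_add linear_cmul inner_add_left inner_add_right power2_eq_square algebra_simps)
qed

lemma qf_neg: "linear G \<Longrightarrow> qf G (- u) = qf G u"
  by (simp add: qf_def linear_neg)

lemma qf_par:
  assumes "self_adjoint_op G"
  shows "qf G (u + v) + qf G (u - v) = 2 * qf G u + 2 * qf G v"
  using qf_expand[OF assms, of u 1 v] qf_expand[OF assms, of u "-1" v] by simp

lemma argmin_subgrad:
  fixes F :: "'a::real_inner \<Rightarrow> 'a"
  assumes D: "convex D" and f: "convex_on D f" and F: "self_adjoint_op F"
    and am: "is_argmin_on D (\<lambda>u. f u + (1/2) * (u \<bullet> F u) + l \<bullet> u) x" and u: "u \<in> D"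
  shows "f x + (- (F x + l)) \<bullet> (u - x) \<le> f u"
proof -
  define w where "w = u - x"
  have xD: "x \<in> D" using am by (simp add: is_argmin_on_def)
  define \<alpha> where "\<alpha> = f u - f x + w \<bullet> (F x + l)"
  define \<beta> where "\<beta> = \<bar>w \<bullet> F w\<bar> / 2"
  have key: "0 \<le> \<alpha> + t * \<beta>" if t: "0 < t" "t \<le> 1" for t
  proof -
    have eq: "x + t *\<^sub>R w = (1 - t) *\<^sub>R x + t *\<^sub>R u" by (simp add: w_def algebra_simps)
    have mem: "x + t *\<^sub>R w \<in> D" unfolding eq using t xD u D by (intro convexD) auto
    have fc: "f (x + t *\<^sub>R w) \<le> (1 - t) * f x + t * f u"
      unfolding eq using convex_onD[OF f, of t x u] t xD u by auto
    have q: "(x + t *\<^sub>R w) \<bullet> F (x + t *\<^sub>R w) = x \<bullet> F x + 2 * t * (w \<bullet> F x) + t^2 * (w \<bullet> F w)"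
      using qf_expand[OF F, of x t w] sa_sym[OF F, of w x] by (simp add: qf_def inner_commute)
    have "f x + (1/2) * (x \<bullet> F x) + l \<bullet> x \<le> f (x + t *\<^sub>R w) + (1/2) * ((x + t *\<^sub>R w) \<bullet> F (x + t *\<^sub>R w)) + l \<bullet> (x + t *\<^sub>R w)"
      using am mem by (simp add: is_argmin_on_def)
    also have "\<dots> \<le> (1 - t) * f x + t * f u + (1/2) * (x \<bullet> F x + 2 * t * (w \<bullet> F x) + t^2 * (w \<bullet> F w)) + l \<bullet> x + t * (l \<bullet> w)"
      using fc q by (simp add: inner_add_right)
    finally have "0 \<le> t * (f u - f x + w \<bullet> F x + l \<bullet> w) + t * (t * (w \<bullet> F w) / 2)"
      by (simp add: power2_eq_square algebra_simps)
    then have "0 \<le> t * (\<alpha> + t * (w \<bullet> F w) / 2)" unfolding \<alpha>_def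
      by (simp add: inner_add_right inner_commute algebra_simps)
    then have "0 \<le> \<alpha> + t * (w \<bullet> F w) / 2" using t by (simp add: zero_le_mult_iff)
    moreover have "t * (w \<bullet> F w) \<le> t * \<bar>w \<bullet> F w\<bar>" using t by (intro mult_left_mono) auto
    ultimately show ?thesis unfolding \<beta>_def by linarith
  qed
  have "0 \<le> \<alpha>"
  proof (rule ccontr)
    assume "\<not> 0 \<le> \<alpha>"
    then have a: "\<alpha> < 0" by simp
    define t where "t = min 1 (- \<alpha> / (\<beta> + 1))"
    have b: "0 \<le> \<beta>" unfolding \<beta>_def by simp
    have t: "0 < t" "t \<le> 1" using a b by (auto simp: t_def divide_neg_pos)
    have "t * \<beta> \<le> (- \<alpha> / (\<beta> + 1)) * \<beta>" using b by (intro mult_right_mono) (auto simp: t_def)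
    also have "\<dots> < - \<alpha>" using a b by (simp add: field_simps divide_neg_pos)
    finally show False using key[OF t] by linarith
  qed
  then show ?thesis unfolding \<alpha>_def w_def by (simp add: inner_commute inner_diff_right inner_diff_left inner_add_right inner_minus_right)
qed
lemma Zid:
  fixes w a b bt a' :: "'z::real_inner" and \<sigma> \<rho> :: real
  assumes s: "\<sigma> > 0" and r: "\<rho> > 0"
  shows "(1 / (\<sigma> * \<rho>)) * (norm ((w + \<sigma> *\<^sub>R (a + bt)) + (\<sigma> * (\<rho> - 1)) *\<^sub>R a))\<^sup>2 + \<sigma> * (2 - \<rho>) * (norm a)\<^sup>2
   - ((1 / (\<sigma> * \<rho>)) * (norm ((w + (\<rho> * \<sigma>) *\<^sub>R (a + bt) + \<sigma> *\<^sub>R (a' + (bt + \<rho> *\<^sub>R (b - bt)))) + (\<sigma> * (\<rho> - 1)) *\<^sub>R a'))\<^sup>2 + \<sigma> * (2 - \<rho>) * (norm a')\<^sup>2)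
   - \<sigma> * (2 - \<rho>) * (norm (a + b))\<^sup>2
   + 2 * ((w + (\<rho> * \<sigma>) *\<^sub>R (a + bt) + \<sigma> *\<^sub>R (a' + (bt + \<rho> *\<^sub>R (b - bt)))) \<bullet> a')
   + 2 * (((w + \<sigma> *\<^sub>R (a + bt)) + \<sigma> *\<^sub>R (a + b)) \<bullet> b) = 0"
  using s r
  by (simp add: power2_norm_eq_inner inner_add_left inner_add_right inner_diff_left inner_diff_right
      inner_commute field_simps)


theorem lemma5:
  fixes f1 f2 :: "'x::euclidean_space \<Rightarrow> real" and Df :: "'x set"
    and h1 h2 :: "'y::euclidean_space \<Rightarrow> real" and Dh :: "'y set"
    and gf1 :: "'x \<Rightarrow> 'x" and gh1 :: "'y \<Rightarrow> 'y"
    and A :: "'z::euclidean_space \<Rightarrow> 'x" and B :: "'z \<Rightarrow> 'y" and c :: 'z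
    and Sf Sfh S :: "'x \<Rightarrow> 'x" and Sh Shh T :: "'y \<Rightarrow> 'y"
    and \<sigma> \<rho> :: real
    and x xt :: "nat \<Rightarrow> 'x" and y yt :: "nat \<Rightarrow> 'y" and z zt :: "nat \<Rightarrow> 'z"
    and xb :: 'x and yb :: 'y and zb :: 'z
  assumes f1: "smooth_convex f1 gf1" and h1: "smooth_convex h1 gh1"
    and f2: "closed_proper_convex Df f2" and h2: "closed_proper_convex Dh h2"
    and linA: "linear A" and linB: "linear B"
    and Sf: "psd_op Sf" and Sfh: "psd_op Sfh" and Sf_le: "psd_op (\<lambda>u. Sfh u - Sf u)"
    and Sh: "psd_op Sh" and Shh: "psd_op Shh" and Sh_le: "psd_op (\<lambda>u. Shh u - Sh u)"
    and f1_bounds: "\<And>u u'. (1/2) * qf Sf (u - u') \<le> f1 u - f1 u' - (u - u') \<bullet> gf1 u'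
                          \<and> f1 u - f1 u' - (u - u') \<bullet> gf1 u' \<le> (1/2) * qf Sfh (u - u')"
    and h1_bounds: "\<And>v v'. (1/2) * qf Sh (v - v') \<le> h1 v - h1 v' - (v - v') \<bullet> gh1 v'
                          \<and> h1 v - h1 v' - (v - v') \<bullet> gh1 v' \<le> (1/2) * qf Shh (v - v')"
    and CQ: "\<exists>x0 y0. (x0, y0) \<in> rel_interior (Df \<times> Dh) \<and> adjoint A x0 + adjoint B y0 = c"
    and sigma: "\<sigma> > 0" and rho: "0 < \<rho>" "\<rho> < 2"
    and S: "psd_op S" and T: "psd_op T"
    and F_pd: "pd_op (\<lambda>u. Sfh u + S u + \<sigma> *\<^sub>R A (adjoint A u))"
    and H_pd: "pd_op (\<lambda>v. Shh v + T v + \<sigma> *\<^sub>R B (adjoint B v))"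
    and init: "xt 0 \<in> Df" "yt 0 \<in> Dh"
    and xstep: "\<And>k. is_argmin_on Df
       (\<lambda>u. f2 u + (1/2) * (u \<bullet> (Sfh u + S u + \<sigma> *\<^sub>R A (adjoint A u)))
          + (gf1 (xt k) + \<sigma> *\<^sub>R A (adjoint A (xt k) + adjoint B (yt k) - c + (1/\<sigma>) *\<^sub>R zt k)
             - (Sfh (xt k) + S (xt k) + \<sigma> *\<^sub>R A (adjoint A (xt k)))) \<bullet> u) (x k)"
    and zstep: "\<And>k. z k = zt k + \<sigma> *\<^sub>R (adjoint A (x k) + adjoint B (yt k) - c)"
    and ystep: "\<And>k. is_argmin_on Dh
       (\<lambda>v. h2 v + (1/2) * (v \<bullet> (Shh v + T v + \<sigma> *\<^sub>R B (adjoint B v)))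
          + (gh1 (yt k) + \<sigma> *\<^sub>R B (adjoint A (x k) + adjoint B (yt k) - c + (1/\<sigma>) *\<^sub>R z k)
             - (Shh (yt k) + T (yt k) + \<sigma> *\<^sub>R B (adjoint B (yt k)))) \<bullet> v) (y k)"
    and relax: "\<And>k. xt (Suc k) = xt k + \<rho> *\<^sub>R (x k - xt k)"
               "\<And>k. yt (Suc k) = yt k + \<rho> *\<^sub>R (y k - yt k)"
               "\<And>k. zt (Suc k) = zt k + \<rho> *\<^sub>R (z k - zt k)"
    and KKT: "- (gf1 xb + A zb) \<in> subdiff Df f2 xb"
             "- (gh1 yb + B zb) \<in> subdiff Dh h2 yb"
             "adjoint A xb + adjoint B yb = c"
  shows "let \<Psi> = (\<lambda>k. (1 / (\<sigma> * \<rho>)) * (norm ((z k - zb) + (\<sigma> * (\<rho> - 1)) *\<^sub>R adjoint A (x k - xb)))\<^sup>2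
                 + \<sigma> * (2 - \<rho>) * (norm (adjoint A (x k - xb)))\<^sup>2
                 + (1 / \<rho>) * qf (\<lambda>u. Sfh u + S u) (xt (Suc k) - xb)
                 + (1 / \<rho>) * qf (\<lambda>v. Shh v + T v) (yt k - yb));
             \<theta> = (\<lambda>k. qf (\<lambda>u. (1/2) *\<^sub>R Sf u - Sfh u + (2 - \<rho>) *\<^sub>R (Sfh u + S u)) (xt (Suc k) - x (Suc k))
                 + qf (\<lambda>v. (1/2) *\<^sub>R Sh v - Shh v + (2 - \<rho>) *\<^sub>R (Shh v + T v)) (yt k - y k))
         in \<forall>k. \<Psi> k - \<Psi> (Suc k) \<ge> \<theta> k + \<sigma> * (2 - \<rho>) * (norm (adjoint A (x k) + adjoint B (y k) - c))\<^sup>2"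
  proof -
  have lAs: "linear (adjoint A)" by (rule adjoint_linear[OF linA])
  have lBs: "linear (adjoint B)" by (rule adjoint_linear[OF linB])
  have saSf: "self_adjoint_op Sf" and saSfh: "self_adjoint_op Sfh" and saS: "self_adjoint_op S"
    and saSh: "self_adjoint_op Sh" and saShh: "self_adjoint_op Shh" and saT: "self_adjoint_op T"
    using Sf Sfh S Sh Shh T by (simp_all add: psd_op_def)
  have lSf: "linear Sf" and lSfh: "linear Sfh" and lS: "linear S" and lSh: "linear Sh"
    and lShh: "linear Shh" and lT: "linear T"
    using saSf saSfh saS saSh saShh saT by (simp_all add: sa_lin)
  have psdSf: "\<And>u. 0 \<le> qf Sf u" and psdSh: "\<And>u. 0 \<le> qf Sh u"
    using Sf Sh by (simp_all add: psd_op_def qf_def)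
  have saP: "self_adjoint_op (\<lambda>u. Sfh u + S u)"
    unfolding self_adjoint_op_def
    using lSfh lS sa_sym[OF saSfh] sa_sym[OF saS]
    by (simp add: linear_compose_add inner_add_left inner_add_right)
  have saQ: "self_adjoint_op (\<lambda>u. Shh u + T u)"
    unfolding self_adjoint_op_def
    using lShh lT sa_sym[OF saShh] sa_sym[OF saT]
    by (simp add: linear_compose_add inner_add_left inner_add_right)
  have saF: "self_adjoint_op (\<lambda>u. Sfh u + S u + \<sigma> *\<^sub>R A (adjoint A u))"
    using F_pd by (simp add: pd_op_def)
  have saH: "self_adjoint_op (\<lambda>v. Shh v + T v + \<sigma> *\<^sub>R B (adjoint B v))"
    using H_pd by (simp add: pd_op_def)
  have cDf: "convex Df" and cf2: "convex_on Df f2" using f2 by (simp_all add: closed_proper_convex_def)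
  have cDh: "convex Dh" and ch2: "convex_on Dh h2" using h2 by (simp_all add: closed_proper_convex_def)
  have xbD: "xb \<in> Df" and ybD: "yb \<in> Dh" using KKT(1,2) by (simp_all add: subdiff_def)
  have kx: "\<And>u. u \<in> Df \<Longrightarrow> f2 xb + (- (gf1 xb + A zb)) \<bullet> (u - xb) \<le> f2 u"
    using KKT(1) by (simp add: subdiff_def)
  have ky: "\<And>v. v \<in> Dh \<Longrightarrow> h2 yb + (- (gh1 yb + B zb)) \<bullet> (v - yb) \<le> h2 v"
    using KKT(2) by (simp add: subdiff_def)
  have sne: "\<sigma> \<noteq> 0" using sigma by simp
  have xmono: "(gf1 (xt k) - gf1 xb + A (z k - zb) + (Sfh (x k - xt k) + S (x k - xt k))) \<bullet> (x k - xb) \<le> 0" for k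
  proof -
    have veq: "(Sfh (x k) + S (x k) + \<sigma> *\<^sub>R A (adjoint A (x k)))
      + (gf1 (xt k) + \<sigma> *\<^sub>R A (adjoint A (xt k) + adjoint B (yt k) - c + (1/\<sigma>) *\<^sub>R zt k)
             - (Sfh (xt k) + S (xt k) + \<sigma> *\<^sub>R A (adjoint A (xt k))))
      = gf1 (xt k) + A (z k) + (Sfh (x k - xt k) + S (x k - xt k))"
      unfolding zstep using sne
      by (simp add: linear_add[OF linA] linear_diff[OF linA] linear_cmul[OF linA]
          linear_diff[OF lSfh] linear_diff[OF lS] algebra_simps)
    have "f2 (x k) + (- (gf1 (xt k) + A (z k) + (Sfh (x k - xt k) + S (x k - xt k)))) \<bullet> (xb - x k) \<le> f2 xb"
      using argmin_subgrad[OF cDf cf2 saF xstep[of k] xbD] unfolding veq .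
    moreover have "x k \<in> Df" using xstep[of k] by (simp add: is_argmin_on_def)
    then have "f2 xb + (- (gf1 xb + A zb)) \<bullet> (x k - xb) \<le> f2 (x k)" by (rule kx)
    ultimately show ?thesis
      by (simp add: linear_diff[OF linA] inner_add_left inner_diff_left inner_diff_right
          inner_minus_left inner_add_right algebra_simps)
  qed
  have ymono: "(gh1 (yt k) - gh1 yb + B (z k - zb + \<sigma> *\<^sub>R (adjoint A (x k) + adjoint B (y k) - c))
       + (Shh (y k - yt k) + T (y k - yt k))) \<bullet> (y k - yb) \<le> 0" for k
  proof -
    have veq: "(Shh (y k) + T (y k) + \<sigma> *\<^sub>R B (adjoint B (y k)))
      + (gh1 (yt k) + \<sigma> *\<^sub>R B (adjoint A (x k) + adjoint B (yt k) - c + (1/\<sigma>) *\<^sub>R z k)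
             - (Shh (yt k) + T (yt k) + \<sigma> *\<^sub>R B (adjoint B (yt k))))
      = gh1 (yt k) + B (z k + \<sigma> *\<^sub>R (adjoint A (x k) + adjoint B (y k) - c)) + (Shh (y k - yt k) + T (y k - yt k))"
      using sne
      by (simp add: linear_add[OF linB] linear_diff[OF linB] linear_cmul[OF linB]
          linear_diff[OF lShh] linear_diff[OF lT] algebra_simps)
    have "h2 (y k) + (- (gh1 (yt k) + B (z k + \<sigma> *\<^sub>R (adjoint A (x k) + adjoint B (y k) - c)) + (Shh (y k - yt k) + T (y k - yt k)))) \<bullet> (yb - y k) \<le> h2 yb"
      using argmin_subgrad[OF cDh ch2 saH ystep[of k] ybD] unfolding veq .
    moreover have "y k \<in> Dh" using ystep[of k] by (simp add: is_argmin_on_def)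
    then have "h2 yb + (- (gh1 yb + B zb)) \<bullet> (y k - yb) \<le> h2 (y k)" by (rule ky)
    ultimately show ?thesis
      by (simp add: linear_diff[OF linB] linear_add[OF linB] inner_add_left inner_diff_left inner_diff_right
          inner_minus_left inner_add_right algebra_simps)
  qed
  show ?thesis
    unfolding Let_def
  proof (intro allI)
    fix k
    define x1 where "x1 = x (Suc k)"
    define xt1 where "xt1 = xt (Suc k)"
    define z1 where "z1 = z (Suc k)"
    define dx where "dx = x1 - xt1"
    define dy where "dy = y k - yt k"
    define r where "r = adjoint A (x k) + adjoint B (y k) - c"
    have xt2: "xt (Suc (Suc k)) - xb = (xt1 - xb) + \<rho> *\<^sub>R dx"
      unfolding xt1_def dx_def x1_def relax(1)[of "Suc k"] by (simp add: algebra_simps)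
    have yt1: "yt (Suc k) - yb = (yt k - yb) + \<rho> *\<^sub>R dy"
      unfolding dy_def relax(2)[of k] by (simp add: algebra_simps)
    have x1e: "x1 - xb = (xt1 - xb) + dx" unfolding dx_def by simp
    have y0e: "y k - yb = (yt k - yb) + dy" unfolding dy_def by simp
    have MX: "(gf1 xt1 - gf1 xb) \<bullet> (x1 - xb) + (z1 - zb) \<bullet> adjoint A (x1 - xb)
        + (Sfh dx + S dx) \<bullet> (x1 - xb) \<le> 0"
      using xmono[of "Suc k"] unfolding x1_def[symmetric] xt1_def[symmetric] z1_def[symmetric] dx_def[symmetric]
      by (simp add: inner_add_left adjoint_clauses[OF linA])
    have FX: "(gf1 xt1 - gf1 xb) \<bullet> (x1 - xb) \<ge> (1/2) * qf Sf (x1 - xb) + (1/2) * qf Sf (xt1 - xb) - (1/2) * qf Sfh dx"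
    proof -
      have a: "f1 x1 - f1 xt1 - (x1 - xt1) \<bullet> gf1 xt1 \<le> (1/2) * qf Sfh (x1 - xt1)" using f1_bounds by blast
      have b: "(1/2) * qf Sf (xb - xt1) \<le> f1 xb - f1 xt1 - (xb - xt1) \<bullet> gf1 xt1" using f1_bounds by blast
      have c: "(1/2) * qf Sf (x1 - xb) \<le> f1 x1 - f1 xb - (x1 - xb) \<bullet> gf1 xb" using f1_bounds by blast
      have d: "qf Sf (xb - xt1) = qf Sf (xt1 - xb)" using qf_neg[OF lSf, of "xt1 - xb"] by simp
      show ?thesis using a b c d unfolding dx_def
        by (simp add: inner_diff_left inner_diff_right inner_commute algebra_simps)
    qed
    have SX: "qf Sf (x1 - xb) + qf Sf (xt1 - xb) \<ge> (1/2) * qf Sf dx"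
      using qf_par[OF saSf, of "x1 - xb" "xt1 - xb"] psdSf[of "(x1 - xb) + (xt1 - xb)"] unfolding dx_def by simp
    have PX1: "(1/\<rho>) * qf (\<lambda>u. Sfh u + S u) (xt1 - xb) - (1/\<rho>) * qf (\<lambda>u. Sfh u + S u) (xt (Suc (Suc k)) - xb)
        = - 2 * ((xt1 - xb) \<bullet> (Sfh dx + S dx)) - \<rho> * qf (\<lambda>u. Sfh u + S u) dx"
      unfolding xt2 qf_expand[OF saP] using rho by (simp add: field_simps power2_eq_square)
    have PX2: "(Sfh dx + S dx) \<bullet> (x1 - xb) = (xt1 - xb) \<bullet> (Sfh dx + S dx) + qf (\<lambda>u. Sfh u + S u) dx"
      unfolding x1e using sa_sym[OF saP, of dx "xt1 - xb"]
      by (simp add: qf_def inner_add_right inner_commute)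
    have TX: "qf (\<lambda>u. (1/2) *\<^sub>R Sf u - Sfh u + (2 - \<rho>) *\<^sub>R (Sfh u + S u)) (xt1 - x1)
       = (1/2) * qf Sf dx - qf Sfh dx + 2 * qf (\<lambda>u. Sfh u + S u) dx - \<rho> * qf (\<lambda>u. Sfh u + S u) dx"
    proof -
      have e: "xt1 - x1 = - dx" unfolding dx_def by simp
      show ?thesis unfolding e
        by (simp add: qf_def linear_neg[OF lSf] linear_neg[OF lSfh] linear_neg[OF lS]
            inner_add_right inner_diff_right algebra_simps)
    qed
    have MY: "(gh1 (yt k) - gh1 yb) \<bullet> (y k - yb) + (z k - zb + \<sigma> *\<^sub>R r) \<bullet> adjoint B (y k - yb)
        + (Shh dy + T dy) \<bullet> (y k - yb) \<le> 0"
      using ymono[of k] unfolding r_def[symmetric] dy_def[symmetric]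
      by (simp add: inner_add_left adjoint_clauses[OF linB])
    have FY: "(gh1 (yt k) - gh1 yb) \<bullet> (y k - yb) \<ge> (1/2) * qf Sh (y k - yb) + (1/2) * qf Sh (yt k - yb) - (1/2) * qf Shh dy"
    proof -
      have a: "h1 (y k) - h1 (yt k) - (y k - yt k) \<bullet> gh1 (yt k) \<le> (1/2) * qf Shh (y k - yt k)" using h1_bounds by blast
      have b: "(1/2) * qf Sh (yb - yt k) \<le> h1 yb - h1 (yt k) - (yb - yt k) \<bullet> gh1 (yt k)" using h1_bounds by blast
      have c: "(1/2) * qf Sh (y k - yb) \<le> h1 (y k) - h1 yb - (y k - yb) \<bullet> gh1 yb" using h1_bounds by blast
      have d: "qf Sh (yb - yt k) = qf Sh (yt k - yb)" using qf_neg[OF lSh, of "yt k - yb"] by simp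
      show ?thesis using a b c d unfolding dy_def
        by (simp add: inner_diff_left inner_diff_right inner_commute algebra_simps)
    qed
    have SY: "qf Sh (y k - yb) + qf Sh (yt k - yb) \<ge> (1/2) * qf Sh dy"
      using qf_par[OF saSh, of "y k - yb" "yt k - yb"] psdSh[of "(y k - yb) + (yt k - yb)"] unfolding dy_def by simp
    have PY1: "(1/\<rho>) * qf (\<lambda>v. Shh v + T v) (yt k - yb) - (1/\<rho>) * qf (\<lambda>v. Shh v + T v) (yt (Suc k) - yb)
        = - 2 * ((yt k - yb) \<bullet> (Shh dy + T dy)) - \<rho> * qf (\<lambda>v. Shh v + T v) dy"
      unfolding yt1 qf_expand[OF saQ] using rho by (simp add: field_simps power2_eq_square)
    have PY2: "(Shh dy + T dy) \<bullet> (y k - yb) = (yt k - yb) \<bullet> (Shh dy + T dy) + qf (\<lambda>v. Shh v + T v) dy"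
      unfolding y0e using sa_sym[OF saQ, of dy "yt k - yb"]
      by (simp add: qf_def inner_add_right inner_commute)
    have TY: "qf (\<lambda>v. (1/2) *\<^sub>R Sh v - Shh v + (2 - \<rho>) *\<^sub>R (Shh v + T v)) (yt k - y k)
       = (1/2) * qf Sh dy - qf Shh dy + 2 * qf (\<lambda>v. Shh v + T v) dy - \<rho> * qf (\<lambda>v. Shh v + T v) dy"
    proof -
      have e: "yt k - y k = - dy" unfolding dy_def by simp
      show ?thesis unfolding e
        by (simp add: qf_def linear_neg[OF lSh] linear_neg[OF lShh] linear_neg[OF lT]
            inner_add_right inner_diff_right algebra_simps)
    qed
    have cb: "c = adjoint A xb + adjoint B yb" using KKT(3) by simp
    have e1: "z k - zb = (zt k - zb) + \<sigma> *\<^sub>R (adjoint A (x k - xb) + adjoint B (yt k - yb))"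
      unfolding zstep cb by (simp add: linear_diff[OF lAs] linear_diff[OF lBs] algebra_simps)
    have e2: "z1 - zb = (zt k - zb) + (\<rho> * \<sigma>) *\<^sub>R (adjoint A (x k - xb) + adjoint B (yt k - yb))
        + \<sigma> *\<^sub>R (adjoint A (x1 - xb) + (adjoint B (yt k - yb) + \<rho> *\<^sub>R (adjoint B (y k - yb) - adjoint B (yt k - yb))))"
      unfolding z1_def zstep[of "Suc k"] relax(3) relax(2) zstep[of k] cb x1_def[symmetric]
      by (simp add: linear_diff[OF lAs] linear_diff[OF lBs] linear_add[OF lBs] linear_cmul[OF lBs] algebra_simps)
    have e3: "r = adjoint A (x k - xb) + adjoint B (y k - yb)"
      unfolding r_def cb by (simp add: linear_diff[OF lAs] linear_diff[OF lBs] algebra_simps)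
    have Z: "(1 / (\<sigma> * \<rho>)) * (norm ((z k - zb) + (\<sigma> * (\<rho> - 1)) *\<^sub>R adjoint A (x k - xb)))\<^sup>2 + \<sigma> * (2 - \<rho>) * (norm (adjoint A (x k - xb)))\<^sup>2
   - ((1 / (\<sigma> * \<rho>)) * (norm ((z1 - zb) + (\<sigma> * (\<rho> - 1)) *\<^sub>R adjoint A (x1 - xb)))\<^sup>2 + \<sigma> * (2 - \<rho>) * (norm (adjoint A (x1 - xb)))\<^sup>2)
   - \<sigma> * (2 - \<rho>) * (norm r)\<^sup>2
   + 2 * ((z1 - zb) \<bullet> adjoint A (x1 - xb))
   + 2 * ((z k - zb + \<sigma> *\<^sub>R r) \<bullet> adjoint B (y k - yb)) = 0"
      unfolding e1 e2 e3 by (rule Zid[OF sigma rho(1)])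
    have "r = adjoint A (x k) + adjoint B (y k) - c" by (simp add: r_def)
    show "(1 / (\<sigma> * \<rho>)) * (norm ((z k - zb) + (\<sigma> * (\<rho> - 1)) *\<^sub>R adjoint A (x k - xb)))\<^sup>2
                 + \<sigma> * (2 - \<rho>) * (norm (adjoint A (x k - xb)))\<^sup>2
                 + (1 / \<rho>) * qf (\<lambda>u. Sfh u + S u) (xt (Suc k) - xb)
                 + (1 / \<rho>) * qf (\<lambda>v. Shh v + T v) (yt k - yb) -
           ((1 / (\<sigma> * \<rho>)) * (norm ((z (Suc k) - zb) + (\<sigma> * (\<rho> - 1)) *\<^sub>R adjoint A (x (Suc k) - xb)))\<^sup>2
                 + \<sigma> * (2 - \<rho>) * (norm (adjoint A (x (Suc k) - xb)))\<^sup>2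
                 + (1 / \<rho>) * qf (\<lambda>u. Sfh u + S u) (xt (Suc (Suc k)) - xb)
                 + (1 / \<rho>) * qf (\<lambda>v. Shh v + T v) (yt (Suc k) - yb))
         \<ge> qf (\<lambda>u. (1/2) *\<^sub>R Sf u - Sfh u + (2 - \<rho>) *\<^sub>R (Sfh u + S u)) (xt (Suc k) - x (Suc k))
                 + qf (\<lambda>v. (1/2) *\<^sub>R Sh v - Shh v + (2 - \<rho>) *\<^sub>R (Shh v + T v)) (yt k - y k)
            + \<sigma> * (2 - \<rho>) * (norm (adjoint A (x k) + adjoint B (y k) - c))\<^sup>2"
      unfolding x1_def[symmetric] xt1_def[symmetric] z1_def[symmetric] r_def[symmetric]
      using MX FX SX PX1 PX2 TX MY FY SY PY1 PY2 TY Z by linarith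
  qed
qed

end
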